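(* Let $\mathbb{K}$ be a field with $1+1\neq0$. Any two non-zero symmetric $2\times2$ matrices $P,Q$ over $\mathbb{K}$ with the same determinant are geometrically equivalent over $\mathbb{K}$, i.e. there is $A\in\mathrm{GL}_2(\mathbb{K})$ with $P=A^tQA/|A|$.
   Context: $|A|$ denotes the determinant of $A$ and $\mathrm{GL}_2(\mathbb{K})$ the group of invertible $2\times2$ matrices over $\mathbb{K}$. *)

theory Defs
  imports "HOL-Analysis.Analysis"
begin

end

theory Submission
  imports Defs
begin

definition act :: "'a::field ^ 2 ^ 2 \<Rightarrow> 'a ^ 2 ^ 2 \<Rightarrow> 'a ^ 2 ^ 2" where
  "act A Q = (\<chi> i j. ((transpose A ** Q ** A) $ i $ j) / det A)"

lemma forall_2: "(\<forall>i::2. P i) \<longleftrightarrow> P 1 \<and> P 2"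
  by (metis exhaust_2)

lemma mat_eq2: "(M::'a^2^2) = N \<longleftrightarrow> M$1$1 = N$1$1 \<and> M$1$2 = N$1$2 \<and> M$2$1 = N$2$1 \<and> M$2$2 = N$2$2"
  by (auto simp: vec_eq_iff forall_2)

lemma mul_div_left: "(X::'a::field^'n^'m) ** (\<chi> i j. (M::'a^'k^'n)$i$j / d) = (\<chi> i j. (X ** M)$i$j / d)"
  by (simp add: matrix_matrix_mult_def vec_eq_iff sum_divide_distrib)

lemma mul_div_right: "(\<chi> i j. (M::'a::field^'n^'m)$i$j / d) ** (X::'a^'k^'n) = (\<chi> i j. (M ** X)$i$j / d)"
  by (simp add: matrix_matrix_mult_def vec_eq_iff sum_divide_distrib)

lemma act_comp:
  fixes A B Q :: "'a::field^2^2"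
  shows "act A (act B Q) = act (B ** A) Q"
  unfolding act_def mul_div_left mul_div_right
  by (simp add: det_mul matrix_transpose_mul matrix_mul_assoc vec_eq_iff mult.commute)

lemma act_id: "act (mat 1) Q = Q"
  by (simp add: act_def det_I transpose_mat vec_eq_iff)

lemma act_entries:
  fixes B Q :: "'a::field^2^2"
  shows "act B Q = (\<chi> i j. (\<Sum>l\<in>UNIV. \<Sum>k\<in>UNIV. B$k$i * Q$k$l * B$l$j) / det B)"
  by (simp add: act_def matrix_matrix_mult_def transpose_def vec_eq_iff sum_distrib_left sum_distrib_right mult.assoc)

lemma canon:
  fixes Q :: "'a::field^2^2"
  assumes two: "(1::'a) + 1 \<noteq> 0" and Q0: "Q \<noteq> 0" and sym: "transpose Q = Q"
  shows "\<exists>B. det B \<noteq> 0 \<and> act B Q = (\<chi> i j. if i = j then (if i = 1 then -1 else - det Q) else 0)"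
proof -
  have "transpose Q $ 1 $ 2 = Q $ 1 $ 2" using sym by simp
  then have q21: "Q$2$1 = Q$1$2" by (simp add: transpose_def)
  define a where "a = Q$1$1"
  define b where "b = Q$1$2"
  define c where "c = Q$2$2"
  have dQ: "det Q = a*c - b*b" by (simp add: det_2 a_def b_def c_def q21)
  have ne12: "(1::2) \<noteq> 2" by simp
  show ?thesis
  proof (cases "a = 0")
    case False
    define B :: "'a^2^2" where "B = (\<chi> i j. if i = 1 then (if j = 1 then 1 else b) else (if j = 1 then 0 else -a))"
    have dB: "det B = -a" by (simp add: B_def det_2 ne12)
    have "act B Q = (\<chi> i j. if i = j then (if i = 1 then -1 else - det Q) else 0)"
      unfolding act_entries mat_eq2 dB dQ
      using False by (simp add: B_def sum_2 ne12 q21 flip: a_def b_def c_def) (simp add: field_simps)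
    then show ?thesis using dB False by (intro exI[where x=B]) auto
  next
    case a0: True
    show ?thesis
    proof (cases "c = 0")
      case False
      define B :: "'a^2^2" where "B = (\<chi> i j. if i = 1 then (if j = 1 then 0 else c) else (if j = 1 then 1 else -b))"
      have dB: "det B = -c" by (simp add: B_def det_2 ne12)
      have "act B Q = (\<chi> i j. if i = j then (if i = 1 then -1 else - det Q) else 0)"
        unfolding act_entries mat_eq2 dB dQ
        using False a0 by (simp add: B_def sum_2 ne12 q21 flip: a_def b_def c_def)
      then show ?thesis using dB False by (intro exI[where x=B]) auto
    next
      case c0: True
      have b0: "b \<noteq> 0"
      proof
        assume "b = 0"
        then have "Q = 0" using a0 c0 q21 by (simp add: mat_eq2 a_def b_def c_def)
        then show False using Q0 by simp
      qed
      define B :: "'a^2^2" where "B = (\<chi> i j. if i = 1 then (if j = 1 then 1 else b) else (if j = 1 then 1 else -b))"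
      have dB: "det B = -((1+1)*b)" by (simp add: B_def det_2 ne12 algebra_simps)
      have nz: "(1+1)*b \<noteq> 0" using two b0 by simp
      have "act B Q = (\<chi> i j. if i = j then (if i = 1 then -1 else - det Q) else 0)"
        unfolding act_entries mat_eq2 dB dQ
        using nz a0 c0 by (simp add: B_def sum_2 ne12 q21 flip: a_def b_def c_def)
      then show ?thesis using dB nz by (intro exI[where x=B]) auto
    qed
  qed
qed

theorem theorem5p12:
  fixes P Q :: "'a::field ^ 2 ^ 2"
  assumes "(1::'a) + 1 \<noteq> 0"
    and "P \<noteq> 0" and "Q \<noteq> 0"
    and "transpose P = P" and "transpose Q = Q"
    and "det P = det Q"
  shows "\<exists>A :: 'a ^ 2 ^ 2. invertible A \<and>
           P = (\<chi> i j. ((transpose A ** Q ** A) $ i $ j) / det A)"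
proof -
  obtain B1 where B1: "det B1 \<noteq> 0" "act B1 P = (\<chi> i j. if i = j then (if i = 1 then -1 else - det P) else 0)"
    using canon[OF assms(1,2,4)] by auto
  obtain B2 where B2: "det B2 \<noteq> 0" "act B2 Q = (\<chi> i j. if i = j then (if i = 1 then -1 else - det Q) else 0)"
    using canon[OF assms(1,3,5)] by auto
  obtain C where C: "B1 ** C = mat 1" "C ** B1 = mat 1"
    using B1(1) invertible_det_nz invertible_def by blast
  have dC: "det C \<noteq> 0" using C(1) det_mul[of B1 C] by (auto simp: det_I)
  have "P = act (B1 ** C) P" by (simp add: C(1) act_id)
  also have "\<dots> = act C (act B1 P)" by (simp add: act_comp)
  also have "\<dots> = act C (act B2 Q)" by (simp only: B1(2) B2(2) assms(6))
  also have "\<dots> = act (B2 ** C) Q" by (simp add: act_comp)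
  finally have "P = act (B2 ** C) Q" .
  moreover have "invertible (B2 ** C)" using B2(1) dC by (simp add: invertible_det_nz det_mul)
  ultimately show ?thesis unfolding act_def by blast
qed

end
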